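(* Let $\mathfrak L=(V,E,\lambda,\iota)$ be a $\lambda$-graph system presenting a subshift $\Lambda$. If $\mathfrak L$ is $\lambda$-irreducible then $\mathfrak L$ is $\iota$-irreducible, and if $\mathfrak L$ is $\iota$-irreducible then $\Lambda$ is irreducible.
   Context: A $\lambda$-graph system over a finite alphabet $\Sigma$ is $\mathfrak L=(V,E,\lambda,\iota)$ where $V=\bigsqcup_{l\ge0}V_l$ with $V_l$ finite, $E=\bigsqcup_{l\ge0}E_{l,l+1}$ with each $e\in E_{l,l+1}$ having source $s(e)\in V_l$ and terminal $t(e)\in V_{l+1}$, $\lambda:E\to\Sigma$ a labeling, $\iota:V_{l+1}\to V_l$ surjections, every vertex has an outgoing edge and every vertex of $V_{l+1}$ an incoming edge, and (local property) for $u\in V_{l-1}$, $v\in V_{l+1}$ there is a label-preserving bijection between $\{e\in E_{l,l+1}:t(e)=v,\ \iota(s(e))=u\}$ and $\{e\in E_{l-1,l}:s(e)=u,\ t(e)=\iota(v)\}$. A labeled path is a finite sequence of consecutive edges $e_1,\dots,e_n$ with $e_i\in E_{k+i-1,k+i}$ and $t(e_i)=s(e_{i+1})$; its label is $(\lambda(e_1),\dots,\lambda(e_n))$. The presented subshift $\Lambda$ is the subshift whose admissible words are the labels of labeled paths; a subshift is irreducible if for admissible $\mu,\nu$ there is $\eta$ with $\mu\eta\nu$ admissible. $\iota^n$ denotes the $n$-fold composition of the maps $\iota$. $\mathfrak L$ is $\iota$-irreducible if for any $u,v\in V_l$ and any labeled path $\gamma$ leaving $u$ there exist $n$, a labeled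 path $\eta$ of length $n$ leaving $v$ with $\iota^n(t(\eta))=u$, and a labeled path $\gamma'$ leaving $t(\eta)$ with $\iota^n(t(\gamma'))=t(\gamma)$ and $\lambda(\gamma')=\lambda(\gamma)$. $\mathfrak L$ is $\lambda$-irreducible if for any ordered pair $u,v\in V_l$ there is $L(u,v)\in\mathbb N$ such that for every $w\in V_{l+L(u,v)}$ with $\iota^{L(u,v)}(w)=u$ there is a labeled path $\gamma$ with $s(\gamma)=v$, $t(\gamma)=w$. *)

theory Defs
  imports Main
begin

text \<open>A lambda-graph system over the finite alphabet Sigma is given by
  vertex levels V l (the set V_l), edge levels E l (the set E_{l,l+1}),
  source/terminal maps src, trg, labelling lab, and the maps iota : V_{l+1} -> V_l
  (all packaged as total functions, only relevant on the respective sets).\<close>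

definition lambda_graph_system ::
  "'a set \<Rightarrow> (nat \<Rightarrow> 'v set) \<Rightarrow> (nat \<Rightarrow> 'e set) \<Rightarrow> ('e \<Rightarrow> 'v) \<Rightarrow> ('e \<Rightarrow> 'v)
   \<Rightarrow> ('e \<Rightarrow> 'a) \<Rightarrow> ('v \<Rightarrow> 'v) \<Rightarrow> bool" where
  "lambda_graph_system \<Sigma> V E src trg lab iota \<longleftrightarrow>
     finite \<Sigma> \<and>
     (\<forall>l. finite (V l)) \<and>
     (\<forall>l m. l \<noteq> m \<longrightarrow> V l \<inter> V m = {}) \<and>
     (\<forall>l m. l \<noteq> m \<longrightarrow> E l \<inter> E m = {}) \<and>
     (\<forall>l. \<forall>e\<in>E l. src e \<in> V l \<and> trg e \<in> V (Suc l) \<and> lab e \<in> \<Sigma>) \<and>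
     (\<forall>l. iota ` V (Suc l) = V l) \<and>
     (\<forall>l. \<forall>v\<in>V l. \<exists>e\<in>E l. src e = v) \<and>
     (\<forall>l. \<forall>v\<in>V (Suc l). \<exists>e\<in>E l. trg e = v) \<and>
     (\<forall>l. \<forall>u\<in>V l. \<forall>v\<in>V (Suc (Suc l)).
        \<exists>f. bij_betw f {e\<in>E (Suc l). trg e = v \<and> iota (src e) = u}
                       {e\<in>E l. src e = u \<and> trg e = iota v}
            \<and> (\<forall>e\<in>{e\<in>E (Suc l). trg e = v \<and> iota (src e) = u}. lab (f e) = lab e))"

fun lpath :: "(nat \<Rightarrow> 'v set) \<Rightarrow> (nat \<Rightarrow> 'e set) \<Rightarrow> ('e \<Rightarrow> 'v) \<Rightarrow> ('e \<Rightarrow> 'v)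
   \<Rightarrow> nat \<Rightarrow> 'v \<Rightarrow> 'e list \<Rightarrow> 'v \<Rightarrow> bool" where
  "lpath V E src trg k v [] w \<longleftrightarrow> v \<in> V k \<and> w = v"
| "lpath V E src trg k v (e # es) w \<longleftrightarrow>
     v \<in> V k \<and> e \<in> E k \<and> src e = v \<and> lpath V E src trg (Suc k) (trg e) es w"

definition admissible_words ::
  "(nat \<Rightarrow> 'v set) \<Rightarrow> (nat \<Rightarrow> 'e set) \<Rightarrow> ('e \<Rightarrow> 'v) \<Rightarrow> ('e \<Rightarrow> 'v) \<Rightarrow> ('e \<Rightarrow> 'a)
   \<Rightarrow> 'a list set" where
  "admissible_words V E src trg lab =
     {map lab es | es k v w. lpath V E src trg k v es w}"

definition irreducible_subshift :: "'a list set \<Rightarrow> bool" where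
  "irreducible_subshift W \<longleftrightarrow>
     (\<forall>\<mu>\<in>W. \<forall>\<nu>\<in>W. \<exists>\<eta>. \<mu> @ \<eta> @ \<nu> \<in> W)"

definition iota_irreducible ::
  "(nat \<Rightarrow> 'v set) \<Rightarrow> (nat \<Rightarrow> 'e set) \<Rightarrow> ('e \<Rightarrow> 'v) \<Rightarrow> ('e \<Rightarrow> 'v) \<Rightarrow> ('e \<Rightarrow> 'a)
   \<Rightarrow> ('v \<Rightarrow> 'v) \<Rightarrow> bool" where
  "iota_irreducible V E src trg lab iota \<longleftrightarrow>
     (\<forall>l. \<forall>u\<in>V l. \<forall>v\<in>V l. \<forall>\<gamma> x. lpath V E src trg l u \<gamma> x \<longrightarrow>
        (\<exists>n \<eta> y. length \<eta> = n \<and> lpath V E src trg l v \<eta> y \<and> (iota ^^ n) y = u \<and>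
           (\<exists>\<gamma>' z. lpath V E src trg (l + n) y \<gamma>' z \<and> (iota ^^ n) z = x
                  \<and> map lab \<gamma>' = map lab \<gamma>)))"

definition lambda_irreducible ::
  "(nat \<Rightarrow> 'v set) \<Rightarrow> (nat \<Rightarrow> 'e set) \<Rightarrow> ('e \<Rightarrow> 'v) \<Rightarrow> ('e \<Rightarrow> 'v)
   \<Rightarrow> ('v \<Rightarrow> 'v) \<Rightarrow> bool" where
  "lambda_irreducible V E src trg iota \<longleftrightarrow>
     (\<forall>l. \<forall>u\<in>V l. \<forall>v\<in>V l. \<exists>L::nat. \<forall>w\<in>V (l + L). (iota ^^ L) w = u \<longrightarrow>
        (\<exists>\<gamma>. lpath V E src trg l v \<gamma> w))"

end

theory Submission
  imports Defs
begin

lemma lgs_conj: "lambda_graph_system \<Sigma> V E src trg lab iota \<Longrightarrow>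
     (\<forall>l m. l \<noteq> m \<longrightarrow> V l \<inter> V m = {}) \<and>
     (\<forall>l. \<forall>e\<in>E l. src e \<in> V l \<and> trg e \<in> V (Suc l) \<and> lab e \<in> \<Sigma>) \<and>
     (\<forall>l. iota ` V (Suc l) = V l) \<and>
     (\<forall>l. \<forall>u\<in>V l. \<forall>v\<in>V (Suc (Suc l)).
        \<exists>f. bij_betw f {e\<in>E (Suc l). trg e = v \<and> iota (src e) = u}
                       {e\<in>E l. src e = u \<and> trg e = iota v}
            \<and> (\<forall>e\<in>{e\<in>E (Suc l). trg e = v \<and> iota (src e) = u}. lab (f e) = lab e))"
  unfolding lambda_graph_system_def by (elim conjE) (intro conjI; assumption)

lemma lgs_img: "lambda_graph_system \<Sigma> V E src trg lab iota \<Longrightarrow> iota ` V (Suc l) = V l"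
  using lgs_conj by metis

lemma lgs_iota: "lambda_graph_system \<Sigma> V E src trg lab iota \<Longrightarrow> v \<in> V (Suc l) \<Longrightarrow> iota v \<in> V l"
  using lgs_img by (metis imageI)

lemma lgs_surj: "lambda_graph_system \<Sigma> V E src trg lab iota \<Longrightarrow> x \<in> V l \<Longrightarrow> \<exists>z\<in>V (Suc l). iota z = x"
  using lgs_img by (metis imageE)

lemma lgs_edge: "lambda_graph_system \<Sigma> V E src trg lab iota \<Longrightarrow> e \<in> E l \<Longrightarrow> src e \<in> V l \<and> trg e \<in> V (Suc l)"
  using lgs_conj by metis

lemma lgs_disj: "lambda_graph_system \<Sigma> V E src trg lab iota \<Longrightarrow> x \<in> V l \<Longrightarrow> x \<in> V m \<Longrightarrow> l = m"
proof -
  assume "lambda_graph_system \<Sigma> V E src trg lab iota" "x \<in> V l" "x \<in> V m"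
  moreover from lgs_conj[OF this(1)] have "\<forall>l m. l \<noteq> m \<longrightarrow> V l \<inter> V m = {}" by (rule conjunct1)
  ultimately show "l = m" by blast
qed

lemma lgs_local:
  assumes "lambda_graph_system \<Sigma> V E src trg lab iota" "u \<in> V l" "v \<in> V (Suc (Suc l))"
    "e \<in> E l" "src e = u" "trg e = iota v"
  shows "\<exists>e'\<in>E (Suc l). trg e' = v \<and> iota (src e') = u \<and> lab e' = lab e"
proof -
  obtain f where f: "bij_betw f {e\<in>E (Suc l). trg e = v \<and> iota (src e) = u}
                       {e\<in>E l. src e = u \<and> trg e = iota v}"
    "\<forall>e\<in>{e\<in>E (Suc l). trg e = v \<and> iota (src e) = u}. lab (f e) = lab e"
    using lgs_conj[OF assms(1)] assms(2,3) by blast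
  have "e \<in> f ` {e\<in>E (Suc l). trg e = v \<and> iota (src e) = u}"
    using f(1) assms(4-6) unfolding bij_betw_def by auto
  then obtain e' where "e' \<in> {e\<in>E (Suc l). trg e = v \<and> iota (src e) = u}" "f e' = e" by blast
  then show ?thesis using f(2) by force
qed

lemma lpath_end: "lpath V E src trg k v es w \<Longrightarrow> v \<in> V k \<and> w \<in> V (k + length es)"
proof (induction es arbitrary: k v)
  case (Cons a es)
  then show ?case using Cons.IH[of "Suc k" "trg a"] by auto
qed simp

lemma ii_use: "iota_irreducible V E src trg lab iota \<Longrightarrow> u \<in> V l \<Longrightarrow> v \<in> V l \<Longrightarrow>
  lpath V E src trg l u \<gamma> x \<Longrightarrow> \<exists>n \<eta> y \<gamma>' z. length \<eta> = n \<and> lpath V E src trg l v \<eta> y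
   \<and> lpath V E src trg (l+n) y \<gamma>' z \<and> map lab \<gamma>' = map lab \<gamma>"
  unfolding iota_irreducible_def by meson

lemma lpath_append: "lpath V E src trg k v (xs@ys) w \<longleftrightarrow>
   (\<exists>m. lpath V E src trg k v xs m \<and> lpath V E src trg (k+length xs) m ys w)"
proof (induction xs arbitrary: k v)
  case Nil
  then show ?case using lpath_end[of V E src trg k v ys w] by auto
next
  case (Cons a xs)
  then show ?case by auto
qed

lemma lpath_app_intro: "lpath V E src trg k v xs m \<Longrightarrow> lpath V E src trg (k+length xs) m ys w
   \<Longrightarrow> lpath V E src trg k v (xs@ys) w"
  by (subst lpath_append) blast

lemma adm_intro: "lpath V E src trg k v es w \<Longrightarrow> map lab es \<in> admissible_words V E src trg lab"
  unfolding admissible_words_def by blast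

lemma lift1:
  assumes lgs: "lambda_graph_system \<Sigma> V E src trg lab iota"
  shows "lpath V E src trg l u \<gamma> x \<Longrightarrow> z \<in> V (Suc (l + length \<gamma>)) \<Longrightarrow> iota z = x \<Longrightarrow>
   \<exists>y \<gamma>'. lpath V E src trg (Suc l) y \<gamma>' z \<and> iota y = u \<and> map lab \<gamma>' = map lab \<gamma>"
proof (induction \<gamma> arbitrary: l u)
  case Nil
  then show ?case by (intro exI[of _ z] exI[of _ "[]"]) auto
next
  case (Cons e es)
  from Cons.prems have u: "u \<in> V l" "e \<in> E l" "src e = u" "lpath V E src trg (Suc l) (trg e) es x"
    by auto
  from Cons.prems(2) have "z \<in> V (Suc (Suc l + length es))" by simp
  from Cons.IH[OF u(4) this Cons.prems(3)] obtain y1 g1 where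
    g1: "lpath V E src trg (Suc (Suc l)) y1 g1 z" "iota y1 = trg e" "map lab g1 = map lab es" by blast
  have "y1 \<in> V (Suc (Suc l))" using lpath_end[OF g1(1)] by simp
  from lgs_local[OF lgs u(1) this u(2) u(3) g1(2)[symmetric]] obtain e' where
    e': "e' \<in> E (Suc l)" "trg e' = y1" "iota (src e') = u" "lab e' = lab e" by blast
  have "src e' \<in> V (Suc l)" using lgs_edge[OF lgs e'(1)] by simp
  then show ?case using e' g1 by (intro exI[of _ "src e'"] exI[of _ "e'#g1"]) auto
qed

lemma liftn:
  assumes lgs: "lambda_graph_system \<Sigma> V E src trg lab iota"
    and p: "lpath V E src trg l u \<gamma> x"
  shows "z \<in> V (l + m + length \<gamma>) \<Longrightarrow> (iota^^m) z = x \<Longrightarrow>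
   \<exists>y \<gamma>'. lpath V E src trg (l+m) y \<gamma>' z \<and> (iota^^m) y = u \<and> map lab \<gamma>' = map lab \<gamma>"
proof (induction m arbitrary: z)
  case 0
  then show ?case using p by auto
next
  case (Suc m)
  have zi: "iota z \<in> V (l + m + length \<gamma>)" using lgs_iota[OF lgs, of z] Suc.prems(1) by simp
  have "(iota^^m) (iota z) = x" using Suc.prems(2) by (simp add: funpow_swap1)
  from Suc.IH[OF zi this] obtain y1 g1 where
    g1: "lpath V E src trg (l+m) y1 g1 (iota z)" "(iota^^m) y1 = u" "map lab g1 = map lab \<gamma>" by blast
  have len: "length g1 = length \<gamma>" using g1(3) by (metis length_map)
  have "z \<in> V (Suc (l + m + length g1))" using Suc.prems(1) len by simp
  from lift1[OF lgs g1(1) this refl] obtain y g where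
    "lpath V E src trg (Suc (l+m)) y g z" "iota y = y1" "map lab g = map lab g1" by blast
  then show ?case using g1 by (intro exI[of _ y] exI[of _ g]) (auto simp: funpow_swap1)
qed

lemma exists_up:
  assumes lgs: "lambda_graph_system \<Sigma> V E src trg lab iota" and x: "x \<in> V l"
  shows "\<exists>z\<in>V (l+m). (iota^^m) z = x"
proof (induction m)
  case 0
  then show ?case using x by auto
next
  case (Suc m)
  then obtain z1 where "z1 \<in> V (l+m)" "(iota^^m) z1 = x" by blast
  moreover from lgs_surj[OF lgs this(1)] obtain z where "z \<in> V (Suc (l+m))" "iota z = z1" by blast
  ultimately show ?case by (intro bexI[of _ z]) (auto simp: funpow_swap1)
qed

theorem lemma2p6:
  assumes "lambda_graph_system \<Sigma> V E src trg lab iota"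
  shows "(lambda_irreducible V E src trg iota \<longrightarrow> iota_irreducible V E src trg lab iota)
       \<and> (iota_irreducible V E src trg lab iota \<longrightarrow>
            irreducible_subshift (admissible_words V E src trg lab))"
proof (intro conjI impI)
  note lgs = assms
  assume li: "lambda_irreducible V E src trg iota"
  show "iota_irreducible V E src trg lab iota"
    unfolding iota_irreducible_def
  proof (intro allI ballI impI)
    fix l u v \<gamma> x
    assume uv: "u \<in> V l" "v \<in> V l" and p: "lpath V E src trg l u \<gamma> x"
    obtain L where L: "\<forall>w\<in>V (l + L). (iota ^^ L) w = u \<longrightarrow> (\<exists>\<gamma>. lpath V E src trg l v \<gamma> w)"
      using li uv unfolding lambda_irreducible_def by blast
    have "x \<in> V (l + length \<gamma>)" using lpath_end[OF p] by simp
    from exists_up[OF lgs this, of L] obtain z where z: "z \<in> V (l + L + length \<gamma>)" "(iota^^L) z = x"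
      by (auto simp: ac_simps)
    from liftn[OF lgs p z] obtain y g where
      g: "lpath V E src trg (l+L) y g z" "(iota^^L) y = u" "map lab g = map lab \<gamma>" by blast
    have y: "y \<in> V (l+L)" using lpath_end[OF g(1)] by simp
    then obtain \<eta> where eta: "lpath V E src trg l v \<eta> y" using L g(2) by blast
    have "y \<in> V (l + length \<eta>)" using lpath_end[OF eta] by simp
    then have "length \<eta> = L" using lgs_disj[OF lgs y] by force
    then show "\<exists>n \<eta> y. length \<eta> = n \<and> lpath V E src trg l v \<eta> y \<and> (iota ^^ n) y = u \<and>
           (\<exists>\<gamma>' z. lpath V E src trg (l + n) y \<gamma>' z \<and> (iota ^^ n) z = x
                  \<and> map lab \<gamma>' = map lab \<gamma>)"
      using eta g z by blast
  qed
next
  note lgs = assms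
  assume ii: "iota_irreducible V E src trg lab iota"
  show "irreducible_subshift (admissible_words V E src trg lab)"
    unfolding irreducible_subshift_def
  proof (intro ballI)
    fix \<mu> \<nu>
    assume "\<mu> \<in> admissible_words V E src trg lab" "\<nu> \<in> admissible_words V E src trg lab"
    then obtain g1 k1 u1 x1 g2 k2 u2 x2 where
      p1: "\<mu> = map lab g1" "lpath V E src trg k1 u1 g1 x1" and
      p2: "\<nu> = map lab g2" "lpath V E src trg k2 u2 g2 x2"
      unfolding admissible_words_def by blast
    define a where "a = k1 + length g1"
    have x1: "x1 \<in> V a" using lpath_end[OF p1(2)] a_def by simp
    have u2: "u2 \<in> V k2" and x2: "x2 \<in> V (k2 + length g2)" using lpath_end[OF p2(2)] by auto
    show "\<exists>\<eta>. \<mu> @ \<eta> @ \<nu> \<in> admissible_words V E src trg lab"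
    proof (cases "a \<le> k2")
      case True
      define m where "m = k2 - a"
      from exists_up[OF lgs x1, of m] obtain z where z: "z \<in> V (k1 + m + length g1)" "(iota^^m) z = x1"
        using True by (auto simp: m_def a_def ac_simps)
      from liftn[OF lgs p1(2) z] obtain y1 g1' where
        g1': "lpath V E src trg (k1+m) y1 g1' z" "map lab g1' = map lab g1" by blast
      have zk: "z \<in> V k2" using z(1) True by (simp add: m_def a_def)
      from ii_use[OF ii u2 zk p2(2)] obtain n \<eta> y g' w where
        e: "length \<eta> = n" "lpath V E src trg k2 z \<eta> y"
           "lpath V E src trg (k2 + n) y g' w" "map lab g' = map lab g2"
        by blast
      have "length g1' = length g1" using g1'(2) by (metis length_map)
      then have len: "k1 + m + length g1' = k2" using True by (simp add: a_def m_def)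
      have A: "lpath V E src trg k2 z (\<eta>@g') w"
        by (rule lpath_app_intro[OF e(2)]) (use e in simp)
      have P: "lpath V E src trg (k1+m) y1 (g1' @ \<eta> @ g') w"
        by (rule lpath_app_intro[OF g1'(1)]) (simp add: len A)
      have Q: "map lab (g1' @ \<eta> @ g') = \<mu> @ map lab \<eta> @ \<nu>"
        using p1 p2 g1' e by simp
      have "\<mu> @ map lab \<eta> @ \<nu> \<in> admissible_words V E src trg lab"
        using adm_intro[OF P, of lab] unfolding Q .
      then show ?thesis by blast
    next
      case False
      define m where "m = a - k2"
      from exists_up[OF lgs x2, of m] obtain z where z: "z \<in> V (k2 + m + length g2)" "(iota^^m) z = x2"
        by (auto simp: ac_simps)
      from liftn[OF lgs p2(2) z] obtain y2 g2' where
        g2': "lpath V E src trg (k2+m) y2 g2' z" "map lab g2' = map lab g2" by blast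
      have km: "k2 + m = a" using False m_def by simp
      have y2: "y2 \<in> V a" using lpath_end[OF g2'(1)] km by simp
      from ii_use[OF ii y2 x1 g2'(1)[unfolded km]] obtain n \<eta> y g' w where
        e: "length \<eta> = n" "lpath V E src trg a x1 \<eta> y"
           "lpath V E src trg (a + n) y g' w" "map lab g' = map lab g2'"
        by blast
      have A: "lpath V E src trg a x1 (\<eta>@g') w"
        by (rule lpath_app_intro[OF e(2)]) (use e in simp)
      have P: "lpath V E src trg k1 u1 (g1 @ \<eta> @ g') w"
        by (rule lpath_app_intro[OF p1(2)]) (simp add: a_def[symmetric] A)
      have Q: "map lab (g1 @ \<eta> @ g') = \<mu> @ map lab \<eta> @ \<nu>"
        using p1 p2 g2' e by simp
      have "\<mu> @ map lab \<eta> @ \<nu> \<in> admissible_words V E src trg lab"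
        using adm_intro[OF P, of lab] unfolding Q .
      then show ?thesis by blast
    qed
  qed
qed

end
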